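(* Let $G_1=(V_1,E_1)$ and $G_2=(V_2,E_2)$ be finite simple directed graphs (edges are ordered pairs of distinct vertices, written $ij$ for $(i,j)$). Consider binary vectors $\mathbf{x}=(x_{i,k})_{(i,k)\in V_1\times V_2}$, $\mathbf{y}=(y_{ij,kl})_{(ij,kl)\in E_1\times E_2}$, $\mathbf{u}=(u_i)_{i\in V_1}$, $\mathbf{v}=(v_k)_{k\in V_2}$, $\mathbf{e}=(e_{ij})_{ij\in E_1}$, $\mathbf{f}=(f_{kl})_{kl\in E_2}$, all with entries in $\{0,1\}$. Consider the constraints (C1) $u_i+\sum_{k\in V_2}x_{i,k}=1$ for all $i\in V_1$; (C2) $v_k+\sum_{i\in V_1}x_{i,k}=1$ for all $k\in V_2$; (C3) $e_{ij}+\sum_{kl\in E_2}y_{ij,kl}=1$ for all $ij\in E_1$; (C4) $f_{kl}+\sum_{ij\in E_1}y_{ij,kl}=1$ for all $kl\in E_2$; (C5) $y_{ij,kl}\le x_{i,k}$ for all $(ij,kl)\in E_1\times E_2$; (C6) $y_{ij,kl}\le x_{j,l}$ for all $(ij,kl)\in E_1\times E_2$; (C7) $\sum_{l\in V_2:\,kl\in E_2}y_{ij,kl}\le x_{i,k}$ for all $k\in V_2$ and all $ij\in E_1$; (C8) $\sum_{k\in V_2:\,kl\in E_2}y_{ij,kl}\le x_{j,l}$ for all $l\in V_2$ and all $ij\in E_1$. Let $\Gamma_1$ be the set of binary 6-tuples $(\mathbf{x},\mathbf{y},\mathbf{u},\mathbf{v},\mathbf{e},\mathbf{f})$ satisfying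 (C1)–(C6), and $\Gamma_2$ the set of binary 6-tuples satisfying (C1)–(C4), (C7) and (C8). Then $\Gamma_1=\Gamma_2$.
   Context: The variables encode an edit path: $x_{i,k}=1$ iff vertex $i$ is substituted with $k$, $y_{ij,kl}=1$ iff edge $ij$ is substituted with $kl$, $u_i$/$e_{ij}$ indicate deletion of vertex $i$/edge $ij$ from $G_1$, and $v_k$/$f_{kl}$ indicate insertion of vertex $k$/edge $kl$ of $G_2$. *)

theory Defs
  imports Main
begin

definition simple_digraph :: "'a set \<Rightarrow> ('a \<times> 'a) set \<Rightarrow> bool" where
  "simple_digraph V E \<longleftrightarrow> finite V \<and> E \<subseteq> V \<times> V \<and> (\<forall>(i,j)\<in>E. i \<noteq> j)"

type_synonym ('a,'b) edit_tuple =
  "(('a \<times> 'b) \<Rightarrow> nat) \<times> ((('a \<times> 'a) \<times> ('b \<times> 'b)) \<Rightarrow> nat) \<times> ('a \<Rightarrow> nat) \<times> ('b \<Rightarrow> nat)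
   \<times> (('a \<times> 'a) \<Rightarrow> nat) \<times> (('b \<times> 'b) \<Rightarrow> nat)"

definition binary_tuple :: "'a set \<Rightarrow> ('a \<times> 'a) set \<Rightarrow> 'b set \<Rightarrow> ('b \<times> 'b) set \<Rightarrow> ('a,'b) edit_tuple \<Rightarrow> bool" where
  "binary_tuple V1 E1 V2 E2 t = (case t of (x, y, u, v, e, f) \<Rightarrow>
     (\<forall>p\<in>V1 \<times> V2. x p \<in> {0,1}) \<and> (\<forall>q\<in>E1 \<times> E2. y q \<in> {0,1}) \<and>
     (\<forall>i\<in>V1. u i \<in> {0,1}) \<and> (\<forall>k\<in>V2. v k \<in> {0,1}) \<and>
     (\<forall>a\<in>E1. e a \<in> {0,1}) \<and> (\<forall>b\<in>E2. f b \<in> {0,1}))"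

definition C1to4 :: "'a set \<Rightarrow> ('a \<times> 'a) set \<Rightarrow> 'b set \<Rightarrow> ('b \<times> 'b) set \<Rightarrow> ('a,'b) edit_tuple \<Rightarrow> bool" where
  "C1to4 V1 E1 V2 E2 t = (case t of (x, y, u, v, e, f) \<Rightarrow>
     (\<forall>i\<in>V1. u i + (\<Sum>k\<in>V2. x (i,k)) = 1) \<and>
     (\<forall>k\<in>V2. v k + (\<Sum>i\<in>V1. x (i,k)) = 1) \<and>
     (\<forall>ij\<in>E1. e ij + (\<Sum>kl\<in>E2. y (ij,kl)) = 1) \<and>
     (\<forall>kl\<in>E2. f kl + (\<Sum>ij\<in>E1. y (ij,kl)) = 1))"

definition C5C6 :: "'a set \<Rightarrow> ('a \<times> 'a) set \<Rightarrow> 'b set \<Rightarrow> ('b \<times> 'b) set \<Rightarrow> ('a,'b) edit_tuple \<Rightarrow> bool" where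
  "C5C6 V1 E1 V2 E2 t = (case t of (x, y, u, v, e, f) \<Rightarrow>
     (\<forall>(i,j)\<in>E1. \<forall>(k,l)\<in>E2. y ((i,j),(k,l)) \<le> x (i,k)) \<and>
     (\<forall>(i,j)\<in>E1. \<forall>(k,l)\<in>E2. y ((i,j),(k,l)) \<le> x (j,l)))"

definition C7C8 :: "'a set \<Rightarrow> ('a \<times> 'a) set \<Rightarrow> 'b set \<Rightarrow> ('b \<times> 'b) set \<Rightarrow> ('a,'b) edit_tuple \<Rightarrow> bool" where
  "C7C8 V1 E1 V2 E2 t = (case t of (x, y, u, v, e, f) \<Rightarrow>
     (\<forall>k\<in>V2. \<forall>(i,j)\<in>E1. (\<Sum>l\<in>{l\<in>V2. (k,l)\<in>E2}. y ((i,j),(k,l))) \<le> x (i,k)) \<and>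
     (\<forall>l\<in>V2. \<forall>(i,j)\<in>E1. (\<Sum>k\<in>{k\<in>V2. (k,l)\<in>E2}. y ((i,j),(k,l))) \<le> x (j,l)))"

definition Gamma1 :: "'a set \<Rightarrow> ('a \<times> 'a) set \<Rightarrow> 'b set \<Rightarrow> ('b \<times> 'b) set \<Rightarrow> ('a,'b) edit_tuple set" where
  "Gamma1 V1 E1 V2 E2 = {t. binary_tuple V1 E1 V2 E2 t \<and> C1to4 V1 E1 V2 E2 t \<and> C5C6 V1 E1 V2 E2 t}"

definition Gamma2 :: "'a set \<Rightarrow> ('a \<times> 'a) set \<Rightarrow> 'b set \<Rightarrow> ('b \<times> 'b) set \<Rightarrow> ('a,'b) edit_tuple set" where
  "Gamma2 V1 E1 V2 E2 = {t. binary_tuple V1 E1 V2 E2 t \<and> C1to4 V1 E1 V2 E2 t \<and> C7C8 V1 E1 V2 E2 t}"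

end

theory Submission
  imports Defs
begin

lemma key:
  fixes g :: "'c \<Rightarrow> nat" and h :: "'d \<Rightarrow> 'c"
  assumes "finite E" "sum g E \<le> 1" "finite S" "inj_on h S" "h ` S \<subseteq> E"
    "\<And>s. s \<in> S \<Longrightarrow> g (h s) \<le> c"
  shows "(\<Sum>s\<in>S. g (h s)) \<le> c"
proof -
  have "(\<Sum>s\<in>S. g (h s)) = sum g (h ` S)" using assms(4) by (simp add: sum.reindex)
  also have "\<dots> \<le> sum g E" by (rule sum_mono2[OF assms(1) assms(5)]) simp
  finally have le1: "(\<Sum>s\<in>S. g (h s)) \<le> 1" using assms(2) by simp
  show ?thesis
  proof (cases "(\<Sum>s\<in>S. g (h s)) = 0")
    case True then show ?thesis by simp
  next
    case False
    then obtain s where "s \<in> S" "g (h s) \<noteq> 0" by (metis (mono_tags, lifting) sum.neutral)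
    then have "c \<ge> 1" using assms(6)[of s] by simp
    then show ?thesis using le1 by simp
  qed
qed

theorem proposition2:
  fixes V1 :: "'a set" and E1 :: "('a \<times> 'a) set" and V2 :: "'b set" and E2 :: "('b \<times> 'b) set"
  assumes "simple_digraph V1 E1" and "simple_digraph V2 E2"
  shows "Gamma1 V1 E1 V2 E2 = Gamma2 V1 E1 V2 E2"
proof -
  have fV2: "finite V2" and sub2: "E2 \<subseteq> V2 \<times> V2" using assms(2) by (auto simp: simple_digraph_def)
  have fE2: "finite E2" using fV2 sub2 by (meson finite_SigmaI finite_subset)
  have main: "C5C6 V1 E1 V2 E2 t \<longleftrightarrow> C7C8 V1 E1 V2 E2 t" if C14: "C1to4 V1 E1 V2 E2 t" for t
  proof (cases t)
    case (fields x y u v e f)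
    have s1: "sum (\<lambda>kl. y (ij,kl)) E2 \<le> 1" if "ij \<in> E1" for ij
      using C14 that fields unfolding C1to4_def by force
    have "C5C6 V1 E1 V2 E2 t \<Longrightarrow> C7C8 V1 E1 V2 E2 t"
    proof -
      assume h: "C5C6 V1 E1 V2 E2 t"
      show ?thesis unfolding C7C8_def fields
      proof (simp, intro conjI ballI; clarify)
        fix k i j assume k: "k \<in> V2" and ij: "(i,j) \<in> E1"
        show "(\<Sum>l\<in>{l \<in> V2. (k, l) \<in> E2}. y ((i, j), k, l)) \<le> x (i, k)"
        proof -
          have a: "finite {l \<in> V2. (k, l) \<in> E2}" using fV2 by simp
          have b: "inj_on (\<lambda>l. (k,l)) {l \<in> V2. (k, l) \<in> E2}" by (simp add: inj_on_def)
          have c: "(\<lambda>l. (k,l)) ` {l \<in> V2. (k, l) \<in> E2} \<subseteq> E2" by blast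
          have d: "y ((i, j), k, s) \<le> x (i, k)" if "s \<in> {l \<in> V2. (k, l) \<in> E2}" for s
            using that h ij unfolding C5C6_def fields by fastforce
          show ?thesis using key[OF fE2 s1[OF ij] a b c, of "x (i,k)"] d by simp
        qed
      next
        fix l i j assume l: "l \<in> V2" and ij: "(i,j) \<in> E1"
        show "(\<Sum>k\<in>{k \<in> V2. (k, l) \<in> E2}. y ((i, j), k, l)) \<le> x (j, l)"
        proof -
          have a: "finite {k \<in> V2. (k, l) \<in> E2}" using fV2 by simp
          have b: "inj_on (\<lambda>k. (k,l)) {k \<in> V2. (k, l) \<in> E2}" by (simp add: inj_on_def)
          have c: "(\<lambda>k. (k,l)) ` {k \<in> V2. (k, l) \<in> E2} \<subseteq> E2" by blast
          have d: "y ((i, j), s, l) \<le> x (j, l)" if "s \<in> {k \<in> V2. (k, l) \<in> E2}" for s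
            using that h ij unfolding C5C6_def fields by fastforce
          show ?thesis using key[OF fE2 s1[OF ij] a b c, of "x (j,l)"] d by simp
        qed
      qed
    qed
    moreover have "C7C8 V1 E1 V2 E2 t \<Longrightarrow> C5C6 V1 E1 V2 E2 t"
    proof -
      assume h: "C7C8 V1 E1 V2 E2 t"
      show ?thesis unfolding C5C6_def fields
      proof (simp, intro conjI ballI; clarify)
        fix i j k l assume ij: "(i,j) \<in> E1" and kl: "(k,l) \<in> E2"
        have k: "k \<in> V2" and l: "l \<in> V2" using kl sub2 by auto
        have f1: "finite {l \<in> V2. (k, l) \<in> E2}" "finite {k \<in> V2. (k, l) \<in> E2}" using fV2 by auto
        have "y ((i,j),(k,l)) \<le> (\<Sum>l\<in>{l \<in> V2. (k, l) \<in> E2}. y ((i, j), k, l))"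
          using member_le_sum[OF _ _ f1(1), of l "\<lambda>l. y ((i, j), k, l)"] l kl by simp
        also have "\<dots> \<le> x (i,k)" using h k ij unfolding C7C8_def fields by auto
        finally show "y ((i,j),(k,l)) \<le> x (i,k)" .
        have "y ((i,j),(k,l)) \<le> (\<Sum>k\<in>{k \<in> V2. (k, l) \<in> E2}. y ((i, j), k, l))"
          using member_le_sum[OF _ _ f1(2), of k "\<lambda>k. y ((i, j), k, l)"] k kl by simp
        also have "\<dots> \<le> x (j,l)" using h l ij unfolding C7C8_def fields by auto
        finally show "y ((i,j),(k,l)) \<le> x (j,l)" .
      qed
    qed
    ultimately show ?thesis by blast
  qed
  show ?thesis unfolding Gamma1_def Gamma2_def
  proof (rule Collect_cong)
    fix t show "(binary_tuple V1 E1 V2 E2 t \<and> C1to4 V1 E1 V2 E2 t \<and> C5C6 V1 E1 V2 E2 t) =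
      (binary_tuple V1 E1 V2 E2 t \<and> C1to4 V1 E1 V2 E2 t \<and> C7C8 V1 E1 V2 E2 t)"
      using main[of t] by blast
  qed
qed
end
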